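(* Every convex body $Q\subset\mathbb R^d$ containing the origin admits a linear projection $P$ (a linear idempotent map) onto a one-dimensional linear subspace such that $P(Q)\subseteq Q$.
   Context: A convex body is a compact convex set with non-empty interior. *)

theory Defs
  imports "HOL-Analysis.Analysis"
begin

definition convex_body :: "'a::euclidean_space set \<Rightarrow> bool" where
  "convex_body Q \<longleftrightarrow> compact Q \<and> convex Q \<and> interior Q \<noteq> {}"

end

theory Submission
  imports Defs
begin

lemma core:
  fixes Q :: "'a::euclidean_space set"
  assumes cQ: "convex Q" and Q0: "0 \<in> Q" and xQ: "x \<in> Q" and s0: "s \<ge> 0"
    and yQ: "(- s) *\<^sub>R x \<in> Q" and ax: "a \<bullet> x > 0"
    and bnd: "\<And>q. q \<in> Q \<Longrightarrow> - s * (a \<bullet> x) \<le> a \<bullet> q \<and> a \<bullet> q \<le> a \<bullet> x"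
  shows "\<exists>P :: 'a \<Rightarrow> 'a. linear P \<and> P \<circ> P = P \<and> dim (range P) = 1 \<and> P ` Q \<subseteq> Q"
proof -
  define P where "P = (\<lambda>v. ((a \<bullet> v) / (a \<bullet> x)) *\<^sub>R x)"
  have lin: "linear P" unfolding P_def
    by (intro linearI) (auto simp: inner_add_right add_divide_distrib scaleR_add_left)
  have idem: "P \<circ> P = P" using ax by (auto simp: P_def fun_eq_iff)
  have x0: "x \<noteq> 0" using ax by auto
  have rng: "range P = span {x}"
  proof
    show "range P \<subseteq> span {x}" by (auto simp: P_def span_singleton)
    show "span {x} \<subseteq> range P"
    proof
      fix z assume "z \<in> span {x}"
      then obtain c where z: "z = c *\<^sub>R x" by (auto simp: span_singleton)
      have "P (c *\<^sub>R x) = z" using ax z by (simp add: P_def)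
      then show "z \<in> range P" by (metis rangeI)
    qed
  qed
  have dim1: "dim (range P) = 1" using x0 by (simp add: rng)
  have img: "P ` Q \<subseteq> Q"
  proof
    fix z assume "z \<in> P ` Q"
    then obtain q where q: "q \<in> Q" and z: "z = P q" by auto
    define t where "t = (a \<bullet> q) / (a \<bullet> x)"
    have zt: "z = t *\<^sub>R x" by (simp add: z P_def t_def)
    have t1: "t \<le> 1" using bnd[OF q] ax by (simp add: t_def)
    have t2: "- s \<le> t" using bnd[OF q] ax by (simp add: t_def pos_le_divide_eq)
    show "z \<in> Q"
    proof (cases "t \<ge> 0")
      case True
      have "(1 - t) *\<^sub>R 0 + t *\<^sub>R x \<in> Q"
        using convexD[OF cQ Q0 xQ, of "1 - t" t] True t1 by simp
      then show ?thesis by (simp add: zt)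
    next
      case False
      then have sp: "s > 0" using t2 by linarith
      have h: "0 \<le> 1 + t / s" using t2 sp by (simp add: field_simps)
      have "(1 - (- t / s)) *\<^sub>R 0 + (- t / s) *\<^sub>R ((- s) *\<^sub>R x) \<in> Q"
        using convexD[OF cQ Q0 yQ, of "1 - (- t / s)" "- t / s"] False h sp
        by (simp add: divide_le_eq)
      then show ?thesis using sp by (simp add: zt)
    qed
  qed
  show ?thesis using lin idem dim1 img by blast
qed


theorem proposition2p1:
  fixes Q :: "'a::euclidean_space set"
  assumes "convex_body Q" and "0 \<in> Q"
  shows "\<exists>P :: 'a \<Rightarrow> 'a. linear P \<and> P \<circ> P = P \<and> dim (range P) = 1 \<and> P ` Q \<subseteq> Q"
proof -
  have cpt: "compact Q" and cQ: "convex Q" and intne: "interior Q \<noteq> {}"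
    using assms(1) by (auto simp: convex_body_def)
  have clQ: "closed Q" using cpt compact_imp_closed by blast
  have ri: "rel_interior Q = interior Q"
    using intne rel_interior_nonempty_interior by blast
  have Q0: "0 \<in> Q" by fact
  show ?thesis
  proof (cases "0 \<in> interior Q")
    case False
    have c0: "0 \<in> closure Q" using Q0 closure_subset by auto
    have n0: "0 \<notin> rel_interior Q" using False ri by simp
    obtain a where a0: "a \<noteq> 0" and sup1: "\<And>y. y \<in> closure Q \<Longrightarrow> a \<bullet> 0 \<le> a \<bullet> y"
      and sup2: "\<And>y. y \<in> rel_interior Q \<Longrightarrow> a \<bullet> 0 < a \<bullet> y"
      using supporting_hyperplane_relative_frontier[OF cQ c0 n0] by blast
    obtain z where z: "z \<in> interior Q" using intne by blast
    have az: "a \<bullet> z > 0" using sup2[of z] z ri by simp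
    obtain x where xQ: "x \<in> Q" and xmax: "\<And>q. q \<in> Q \<Longrightarrow> a \<bullet> q \<le> a \<bullet> x"
    proof -
      have "continuous_on Q ((\<bullet>) a)" by (intro continuous_intros)
      then show ?thesis using continuous_attains_sup[OF cpt, of "\<lambda>v. a \<bullet> v"] Q0 that by blast
    qed
    have ax: "a \<bullet> x > 0" using xmax[of z] az z interior_subset by fastforce
    show ?thesis
    proof (rule core[OF cQ Q0 xQ order_refl _ ax])
      show "(- 0) *\<^sub>R x \<in> Q" using Q0 by simp
      fix q assume "q \<in> Q"
      then show "- 0 * (a \<bullet> x) \<le> a \<bullet> q \<and> a \<bullet> q \<le> a \<bullet> x"
        using sup1[of q] xmax[of q] closure_subset by auto
    qed
  next
    case True
    obtain d where d0: "d > 0" and d1: "ball 0 d \<subseteq> interior Q"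
      using openE[OF open_interior True] by metis
    have d: "d > 0" "ball 0 d \<subseteq> Q" using d0 d1 interior_subset by auto
    obtain R where R: "R > 0" "\<And>q. q \<in> Q \<Longrightarrow> norm q \<le> R"
      using compact_imp_bounded[OF cpt] bounded_pos by blast
    define T where "T = {t::real. t \<ge> 0 \<and> (\<forall>q\<in>Q. (- t) *\<^sub>R q \<in> Q)}"
    obtain e :: 'a where e: "norm e = 1" using vector_choose_size[of 1] by auto
    have eQ: "(d/2) *\<^sub>R e \<in> Q" using d e by (auto simp: subset_iff)
    have Tbd: "t \<le> 2 * R / d" if "t \<in> T" for t
    proof -
      have "(- t) *\<^sub>R ((d/2) *\<^sub>R e) \<in> Q" using that eQ by (auto simp: T_def)
      then have "norm ((- t) *\<^sub>R ((d/2) *\<^sub>R e)) \<le> R" using R by blast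
      then have "t * (d/2) \<le> R" using that e d by (simp add: T_def)
      then show ?thesis using d by (simp add: field_simps)
    qed
    have bdd: "bdd_above T" using Tbd by (auto simp: bdd_above_def)
    define s0 where "s0 = d / (2 * R)"
    have s0pos: "s0 > 0" using d R by (simp add: s0_def)
    have s0T: "s0 \<in> T"
    proof -
      have "(- s0) *\<^sub>R q \<in> Q" if "q \<in> Q" for q
      proof -
        have "norm ((- s0) *\<^sub>R q) = s0 * norm q" using s0pos by simp
        also have "\<dots> \<le> s0 * R" using R(2)[OF that] s0pos by (simp add: mult_left_mono)
        also have "\<dots> < d" using d R by (simp add: s0_def)
        finally show ?thesis using d by (auto simp: subset_iff)
      qed
      then show ?thesis using s0pos by (simp add: T_def)
    qed
    define s where "s = Sup T"
    have s0s: "s0 \<le> s" using cSup_upper[OF s0T bdd] by (simp add: s_def)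
    have spos: "s > 0" using s0s s0pos by linarith
    have sT: "(- s) *\<^sub>R q \<in> Q" if qQ: "q \<in> Q" for q
    proof -
      have "\<forall>\<epsilon>>0. \<exists>y\<in>Q. dist y ((- s) *\<^sub>R q) < \<epsilon>"
      proof (intro allI impI)
        fix \<epsilon> :: real assume ep: "\<epsilon> > 0"
        have "s - \<epsilon> / (R + 1) < s" using ep R by simp
        then have "\<exists>t\<in>T. s - \<epsilon> / (R + 1) < t"
          using less_cSup_iff[of T "s - \<epsilon> / (R + 1)"] s0T bdd unfolding s_def by blast
        then obtain t where tT: "t \<in> T" and tl: "s - \<epsilon> / (R + 1) < t" by blast
        have ts: "t \<le> s" using cSup_upper[OF tT bdd] by (simp add: s_def)
        have "dist ((- t) *\<^sub>R q) ((- s) *\<^sub>R q) = (s - t) * norm q"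
          using ts by (simp add: dist_norm algebra_simps flip: scaleR_diff_left)
        also have "\<dots> \<le> (s - t) * R" using R(2)[OF qQ] ts by (simp add: mult_left_mono)
        also have "\<dots> < \<epsilon>"
        proof -
          have "s - t < \<epsilon> / (R + 1)" using tl by simp
          then have "(s - t) * (R + 1) < \<epsilon>" using R by (simp add: field_simps)
          moreover have "(s - t) * R \<le> (s - t) * (R + 1)" using ts by (simp add: distrib_left)
          ultimately show ?thesis by linarith
        qed
        finally show "\<exists>y\<in>Q. dist y ((- s) *\<^sub>R q) < \<epsilon>"
          using tT qQ by (auto simp: T_def)
      qed
      then show ?thesis using closed_approachable[OF clQ] by blast
    qed
    have "\<exists>x\<in>Q. (- s) *\<^sub>R x \<notin> interior Q"
    proof (rule ccontr)
      assume "\<not> ?thesis"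
      then have sub: "(\<lambda>x. (- s) *\<^sub>R x) ` Q \<subseteq> interior Q" by auto
      have "compact ((\<lambda>x. (- s) *\<^sub>R x) ` Q)"
        using compact_scaling[OF cpt, of "- s"] by simp
      then obtain \<epsilon> where ep: "\<epsilon> > 0" and
        un: "(\<Union>x\<in>(\<lambda>x. (- s) *\<^sub>R x) ` Q. ball x \<epsilon>) \<subseteq> interior Q"
        using compact_subset_open_imp_ball_epsilon_subset[OF _ open_interior sub] by blast
      define t where "t = s + \<epsilon> / (2 * (R + 1))"
      have "t \<in> T"
      proof -
        have "(- t) *\<^sub>R q \<in> Q" if qQ: "q \<in> Q" for q
        proof -
          have ts0: "t - s \<ge> 0" using ep R by (simp add: t_def)
          have "(- s) *\<^sub>R q - (- t) *\<^sub>R q = (t - s) *\<^sub>R q" by (simp add: algebra_simps)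
          then have "dist ((- s) *\<^sub>R q) ((- t) *\<^sub>R q) = norm ((t - s) *\<^sub>R q)" by (simp add: dist_norm)
          also have "\<dots> = (t - s) * norm q" using ts0 by simp
          also have "\<dots> \<le> (t - s) * R"
            using R(2)[OF qQ] ts0 by (simp add: mult_left_mono)
          also have "\<dots> < \<epsilon>" using ep R by (simp add: t_def field_simps add_pos_pos mult_pos_pos)
          finally have m: "dist ((- s) *\<^sub>R q) ((- t) *\<^sub>R q) < \<epsilon>" .
          have "(- s) *\<^sub>R q \<in> (\<lambda>x. (- s) *\<^sub>R x) ` Q" using qQ by (rule imageI)
          moreover have "\<forall>x\<in>(\<lambda>x. (- s) *\<^sub>R x) ` Q. ball x \<epsilon> \<subseteq> interior Q"
            using un by (simp only: UN_subset_iff)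
          ultimately have "ball ((- s) *\<^sub>R q) \<epsilon> \<subseteq> interior Q" by (rule bspec[rotated])
          moreover have "(- t) *\<^sub>R q \<in> ball ((- s) *\<^sub>R q) \<epsilon>" using m by (simp only: mem_ball)
          ultimately have "(- t) *\<^sub>R q \<in> interior Q" by (rule subsetD)
          then show ?thesis using interior_subset by auto
        qed
        moreover have "t \<ge> 0" using spos ep R by (simp add: t_def)
        ultimately show ?thesis by (simp add: T_def)
      qed
      then have "t \<le> s" using cSup_upper[OF _ bdd] by (simp add: s_def)
      moreover have "0 < \<epsilon> / (2 * (R + 1))" using ep R by (intro divide_pos_pos) auto
      ultimately show False unfolding t_def by linarith
    qed
    then obtain x where xQ: "x \<in> Q" and yni: "(- s) *\<^sub>R x \<notin> interior Q" by blast
    define y where "y = (- s) *\<^sub>R x"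
    have yQ: "y \<in> Q" using sT[OF xQ] by (simp add: y_def)
    have cy: "y \<in> closure Q" using yQ closure_subset by auto
    have ny: "y \<notin> rel_interior Q" using yni ri by (simp add: y_def)
    obtain a where a0: "a \<noteq> 0" and sup1: "\<And>q. q \<in> closure Q \<Longrightarrow> a \<bullet> y \<le> a \<bullet> q"
      and sup2: "\<And>q. q \<in> rel_interior Q \<Longrightarrow> a \<bullet> y < a \<bullet> q"
      using supporting_hyperplane_relative_frontier[OF cQ cy ny] by blast
    have ay: "a \<bullet> y < 0" using sup2[of 0] True ri by simp
    have ayx: "a \<bullet> y = - s * (a \<bullet> x)" by (simp add: y_def)
    have "s * (a \<bullet> x) > 0" using ay ayx by simp
    then have ax: "a \<bullet> x > 0" using spos by (simp add: zero_less_mult_iff)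
    show ?thesis
    proof (rule core[OF cQ Q0 xQ _ _ ax])
      show "0 \<le> s" using spos by simp
      show "(- s) *\<^sub>R x \<in> Q" using yQ by (simp add: y_def)
      fix q assume qQ: "q \<in> Q"
      have l: "- s * (a \<bullet> x) \<le> a \<bullet> q" using sup1[of q] qQ closure_subset ayx by auto
      have "a \<bullet> y \<le> a \<bullet> ((- s) *\<^sub>R q)" using sup1 sT[OF qQ] closure_subset by (meson subsetD)
      then have "- s * (a \<bullet> x) \<le> - s * (a \<bullet> q)" using ayx by simp
      then have "a \<bullet> q \<le> a \<bullet> x" using spos by simp
      then show "- s * (a \<bullet> x) \<le> a \<bullet> q \<and> a \<bullet> q \<le> a \<bullet> x" using l by simp
    qed
  qed
qed

end
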